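(* Let $(\mathsf{X},\mu)$, $(\mathsf{Y},\nu)$ be Polish probability spaces, $c:\mathsf{X}\times\mathsf{Y}\to[0,\infty)$ continuous, $\pi_\varepsilon$ the $(c,\varepsilon)$-cyclically invariant coupling for each $\varepsilon>0$ (assumed to exist), and assume $\pi_\varepsilon\to\pi_*$ weakly as $\varepsilon\to0$ for some $\pi_*\in\Pi(\mu,\nu)$. Let $\Gamma:=\operatorname{spt}\pi_*$, $\mathsf{X}_0:=\operatorname{proj}_{\mathsf{X}}\Gamma$, $\mathsf{Y}_0:=\operatorname{proj}_{\mathsf{Y}}\Gamma$. Assume that uniqueness of Kantorovich potentials holds on $\mathsf{X}_0$: for any $c$-convex functions $\psi_1,\psi_2$ on $\mathsf{X}$ with $\Gamma\subset\partial_c\psi_i$ ($i=1,2$), the difference $\psi_1-\psi_2$ is constant on $\mathsf{X}_0$. Then for any Kantorovich potential $\psi$, $$I(x,y)=c(x,y)-\psi^c(y)+\psi(x),\qquad (x,y)\in\mathsf{X}_0\times\mathsf{Y}_0.$$ In particular $I<\infty$ on $\mathsf{X}_0\times\mathsf{Y}_0$. Moreover, if $(x,y),(x',y')\in\mathsf{X}_0\times\mathsf{Y}_0$ are such that $(x',y),(x,y')\in\Gamma$, then $$I(x,y)+I(x',y')=c(x,y)+c(x',y')-c(x,y')-c(x',y).$$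
   Context: $\Pi(\mu,\nu)$ is the set of couplings of $\mu,\nu$ and $P:=\mu\otimes\nu$. A coupling $\pi$ is $(c,\varepsilon)$-cyclically invariant if $\pi\sim P$ and its density admits a version $\frac{d\pi}{dP}:\mathsf{X}\times\mathsf{Y}\to(0,\infty)$ with $\prod_{i=1}^k\frac{d\pi}{dP}(x_i,y_i)=\exp\big(-\frac1\varepsilon[\sum_{i=1}^k c(x_i,y_i)-\sum_{i=1}^k c(x_i,y_{i+1})]\big)\prod_{i=1}^k\frac{d\pi}{dP}(x_i,y_{i+1})$ for all $k$ and points, $y_{k+1}:=y_1$. $\Gamma$ is $c$-cyclically monotone. A proper function $\psi:\mathsf{X}\to(-\infty,\infty]$ is $c$-convex if $\psi(x)=\sup_{y\in\mathsf{Y}}[\zeta(y)-c(x,y)]$ for some $\zeta:\mathsf{Y}\to[-\infty,\infty]$; its $c$-conjugate is $\psi^c(y):=\inf_{x\in\mathsf{X}}[\psi(x)+c(x,y)]$ and its $c$-subdifferential is $\partial_c\psi=\{(x,y):\psi^c(y)-\psi(x)=c(x,y)\}$. A Kantorovich potential is a $c$-convex $\psi$ with $\Gamma\subset\partial_c\psi$. The function $I$ is $I(x,y):=\sup_{k\ge2}\sup_{(x_i,y_i)_{i=2}^k\subset\Gamma}\sup_{\sigma\in\Sigma(k)}\sum_{i=1}^k c(x_i,y_i)-\sum_{i=1}^k c(x_i,y_{\sigma(i)})$ with $(x_1,y_1):=(x,y)$ and $\Sigma(k)$ the permutations of $\{1,\dots,k\}$. *)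

theory Defs
  imports "HOL-Probability.Probability"
begin

definition couplings :: "'a::topological_space measure \<Rightarrow> 'b::topological_space measure
    \<Rightarrow> ('a \<times> 'b) measure set" where
  "couplings \<mu> \<nu> = {\<pi>. prob_space \<pi> \<and> sets \<pi> = sets borel \<and>
      distr \<pi> borel fst = \<mu> \<and> distr \<pi> borel snd = \<nu>}"

definition cyc_invariant ::
  "('a \<times> 'b \<Rightarrow> real) \<Rightarrow> real \<Rightarrow> 'a measure \<Rightarrow> 'b measure \<Rightarrow> ('a \<times> 'b) measure \<Rightarrow> bool" where
  "cyc_invariant c \<epsilon> \<mu> \<nu> \<pi> \<longleftrightarrow>
     absolutely_continuous (\<mu> \<Otimes>\<^sub>M \<nu>) \<pi> \<and> absolutely_continuous \<pi> (\<mu> \<Otimes>\<^sub>M \<nu>) \<and>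
     (\<exists>d :: 'a \<times> 'b \<Rightarrow> real.
        d \<in> borel_measurable (\<mu> \<Otimes>\<^sub>M \<nu>) \<and> (\<forall>z. d z > 0) \<and>
        \<pi> = density (\<mu> \<Otimes>\<^sub>M \<nu>) (\<lambda>z. ennreal (d z)) \<and>
        (\<forall>(k::nat) (xs :: nat \<Rightarrow> 'a) (ys :: nat \<Rightarrow> 'b). k \<ge> 1 \<longrightarrow>
           (\<Prod>i<k. d (xs i, ys i)) =
             exp (- (1 / \<epsilon>) * ((\<Sum>i<k. c (xs i, ys i)) - (\<Sum>i<k. c (xs i, ys (Suc i mod k)))))
             * (\<Prod>i<k. d (xs i, ys (Suc i mod k)))))"

definition weak_conv_at0 :: "(real \<Rightarrow> 'c::topological_space measure) \<Rightarrow> 'c measure \<Rightarrow> bool" where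
  "weak_conv_at0 \<pi> \<pi>0 \<longleftrightarrow>
     (\<forall>f :: 'c \<Rightarrow> real. continuous_on UNIV f \<and> bounded (range f) \<longrightarrow>
        ((\<lambda>\<epsilon>. integral\<^sup>L (\<pi> \<epsilon>) f) \<longlongrightarrow> integral\<^sup>L \<pi>0 f) (at_right 0))"

definition spt :: "'c::topological_space measure \<Rightarrow> 'c set" where
  "spt M = {z. \<forall>U. open U \<longrightarrow> z \<in> U \<longrightarrow> emeasure M U > 0}"

definition c_convex :: "('a \<times> 'b \<Rightarrow> real) \<Rightarrow> ('a \<Rightarrow> ereal) \<Rightarrow> bool" where
  "c_convex c \<psi> \<longleftrightarrow> (\<forall>x. \<psi> x \<noteq> -\<infinity>) \<and> (\<exists>x. \<psi> x \<noteq> \<infinity>) \<and>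
     (\<exists>\<zeta> :: 'b \<Rightarrow> ereal. \<forall>x. \<psi> x = (SUP y. \<zeta> y - ereal (c (x, y))))"

definition c_conj :: "('a \<times> 'b \<Rightarrow> real) \<Rightarrow> ('a \<Rightarrow> ereal) \<Rightarrow> 'b \<Rightarrow> ereal" where
  "c_conj c \<psi> y = (INF x. \<psi> x + ereal (c (x, y)))"

text \<open>c-subdifferential; psi(x) is required to be finite (so no infinity - infinity arises).\<close>
definition c_subdiff :: "('a \<times> 'b \<Rightarrow> real) \<Rightarrow> ('a \<Rightarrow> ereal) \<Rightarrow> ('a \<times> 'b) set" where
  "c_subdiff c \<psi> = {(x, y). \<psi> x < \<infinity> \<and> c_conj c \<psi> y - \<psi> x = ereal (c (x, y))}"

definition kantorovich_potential :: "('a \<times> 'b \<Rightarrow> real) \<Rightarrow> ('a \<times> 'b) set \<Rightarrow> ('a \<Rightarrow> ereal) \<Rightarrow> bool" where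
  "kantorovich_potential c \<Gamma> \<psi> \<longleftrightarrow> c_convex c \<psi> \<and> \<Gamma> \<subseteq> c_subdiff c \<psi>"

text \<open>The function I, with indices 0..k-1 (index 0 plays the role of index 1 in the paper).\<close>
definition Ifun :: "('a \<times> 'b \<Rightarrow> real) \<Rightarrow> ('a \<times> 'b) set \<Rightarrow> 'a \<Rightarrow> 'b \<Rightarrow> ereal" where
  "Ifun c \<Gamma> x y = (SUP v \<in> {ereal ((\<Sum>i<k. c (xs i, ys i)) - (\<Sum>i<k. c (xs i, ys (\<sigma> i)))) | (k::nat) (xs::nat \<Rightarrow> 'a) (ys::nat \<Rightarrow> 'b) (\<sigma>::nat \<Rightarrow> nat).
        k \<ge> 2 \<and> xs 0 = x \<and> ys 0 = y \<and> (\<forall>i\<in>{1..<k}. (xs i, ys i) \<in> \<Gamma>) \<and> \<sigma> permutes {..<k}}. v)"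

end

theory Submission
  imports Defs "HOL-Real_Asymp.Real_Asymp"
begin


lemma prod_fubini_perm:
  fixes M1 :: "'a measure" and M2 :: "'b measure" and k :: nat
  assumes s1: "sigma_finite_measure M1" and s2: "sigma_finite_measure M2"
    and h: "\<And>i. i < k \<Longrightarrow> h i \<in> borel_measurable (M1 \<Otimes>\<^sub>M M2)"
    and \<sigma>: "\<sigma> permutes {..<k}"
  shows "(\<integral>\<^sup>+xs. \<integral>\<^sup>+ys. (\<Prod>i<k. h i (xs i, ys (\<sigma> i))) \<partial>PiM {..<k} (\<lambda>_. M2) \<partial>PiM {..<k} (\<lambda>_. M1))
       = (\<Prod>i<k. \<integral>\<^sup>+z. h i z \<partial>(M1 \<Otimes>\<^sub>M M2))"
proof -
  interpret P2: product_sigma_finite "\<lambda>_. M2" using s2 by (simp add: product_sigma_finite_def)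
  interpret P1: product_sigma_finite "\<lambda>_. M1" using s1 by (simp add: product_sigma_finite_def)
  have inv\<sigma>: "inv \<sigma> permutes {..<k}" using \<sigma> by (rule permutes_inv)
  have inner: "(\<integral>\<^sup>+ys. (\<Prod>i<k. h i (xs i, ys (\<sigma> i))) \<partial>PiM {..<k} (\<lambda>_. M2))
      = (\<Prod>i<k. \<integral>\<^sup>+y. h i (xs i, y) \<partial>M2)" if xs: "xs \<in> space (PiM {..<k} (\<lambda>_. M1))" for xs
  proof -
    have "\<And>ys. (\<Prod>i<k. h i (xs i, ys (\<sigma> i))) = (\<Prod>j<k. h (inv \<sigma> j) (xs (inv \<sigma> j), ys j))"
    proof -
      fix ys
      have "(\<Prod>i<k. h i (xs i, ys (\<sigma> i))) = (\<Prod>j<k. h (inv \<sigma> j) (xs (inv \<sigma> j), ys (\<sigma> (inv \<sigma> j))))"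
        using prod.permute[OF inv\<sigma>, of "\<lambda>i. h i (xs i, ys (\<sigma> i))"] by (simp add: comp_def)
      also have "\<dots> = (\<Prod>j<k. h (inv \<sigma> j) (xs (inv \<sigma> j), ys j))"
        using permutes_inverses(1)[OF \<sigma>] by simp
      finally show "?thesis ys" .
    qed
    then have "(\<integral>\<^sup>+ys. (\<Prod>i<k. h i (xs i, ys (\<sigma> i))) \<partial>PiM {..<k} (\<lambda>_. M2))
        = (\<integral>\<^sup>+ys. (\<Prod>j<k. h (inv \<sigma> j) (xs (inv \<sigma> j), ys j)) \<partial>PiM {..<k} (\<lambda>_. M2))" by simp
    also have "\<dots> = (\<Prod>j<k. \<integral>\<^sup>+y. h (inv \<sigma> j) (xs (inv \<sigma> j), y) \<partial>M2)"
    proof (rule P2.product_nn_integral_prod)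
      fix j assume j: "j \<in> {..<k}"
      then have ij: "inv \<sigma> j < k" using permutes_in_image[OF inv\<sigma>] by auto
      then have "xs (inv \<sigma> j) \<in> space M1" using xs by (auto simp: space_PiM)
      then show "(\<lambda>y. h (inv \<sigma> j) (xs (inv \<sigma> j), y)) \<in> borel_measurable M2"
        using h[OF ij] by (rule measurable_compose_Pair1)
    qed simp
    also have "\<dots> = (\<Prod>i<k. \<integral>\<^sup>+y. h i (xs i, y) \<partial>M2)"
      using prod.permute[OF inv\<sigma>, of "\<lambda>i. \<integral>\<^sup>+y. h i (xs i, y) \<partial>M2"] by (simp add: comp_def)
    finally show ?thesis .
  qed
  have "(\<integral>\<^sup>+xs. \<integral>\<^sup>+ys. (\<Prod>i<k. h i (xs i, ys (\<sigma> i))) \<partial>PiM {..<k} (\<lambda>_. M2) \<partial>PiM {..<k} (\<lambda>_. M1))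
      = (\<integral>\<^sup>+xs. (\<Prod>i<k. (\<lambda>x. \<integral>\<^sup>+y. h i (x, y) \<partial>M2) (xs i)) \<partial>PiM {..<k} (\<lambda>_. M1))"
    by (rule nn_integral_cong) (simp add: inner)
  also have "\<dots> = (\<Prod>i<k. \<integral>\<^sup>+x. \<integral>\<^sup>+y. h i (x, y) \<partial>M2 \<partial>M1)"
    by (rule P1.product_nn_integral_prod) (auto intro: sigma_finite_measure.borel_measurable_nn_integral_fst[OF s2] h)
  also have "\<dots> = (\<Prod>i<k. \<integral>\<^sup>+z. h i z \<partial>(M1 \<Otimes>\<^sub>M M2))"
    by (rule prod.cong) (auto intro: sigma_finite_measure.nn_integral_fst[OF s2] h)
  finally show ?thesis .
qed



lemma perm_identity:
  fixes d :: "'a \<times> 'b \<Rightarrow> real" and c :: "'a \<times> 'b \<Rightarrow> real" and \<epsilon> :: real and k :: nat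
  assumes pos: "\<forall>z. d z > 0"
    and cyc: "\<forall>(k::nat) (xs :: nat \<Rightarrow> 'a) (ys :: nat \<Rightarrow> 'b). k \<ge> 1 \<longrightarrow>
           (\<Prod>i<k. d (xs i, ys i)) =
             exp (- (1 / \<epsilon>) * ((\<Sum>i<k. c (xs i, ys i)) - (\<Sum>i<k. c (xs i, ys (Suc i mod k)))))
             * (\<Prod>i<k. d (xs i, ys (Suc i mod k)))"
    and \<sigma>: "\<sigma> permutes {..<k}"
  shows "(\<Prod>i<k. d (xs i, ys i)) =
     exp (- (1 / \<epsilon>) * ((\<Sum>i<k. c (xs i, ys i)) - (\<Sum>i<k. c (xs i, ys (\<sigma> i)))))
       * (\<Prod>i<k. d (xs i, ys (\<sigma> i)))"
proof -
  define w where "w z = ln (d z) + c z / \<epsilon>" for z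
  have two: "w (x, y) + w (x', y') = w (x, y') + w (x', y)" for x y x' y'
  proof -
    have "(\<Prod>i<(2::nat). d ((\<lambda>i. if i = 0 then x else x') i, (\<lambda>i. if i = 0 then y else y') i)) =
             exp (- (1 / \<epsilon>) * ((\<Sum>i<(2::nat). c ((\<lambda>i. if i = 0 then x else x') i, (\<lambda>i. if i = 0 then y else y') i))
              - (\<Sum>i<(2::nat). c ((\<lambda>i. if i = 0 then x else x') i, (\<lambda>i. if i = 0 then y else y') (Suc i mod 2)))))
             * (\<Prod>i<(2::nat). d ((\<lambda>i. if i = 0 then x else x') i, (\<lambda>i. if i = 0 then y else y') (Suc i mod 2)))"
      by (rule cyc[rule_format]) simp
    then have e: "d (x, y) * d (x', y') = exp (- (1 / \<epsilon>) * ((c (x, y) + c (x', y')) - (c (x, y') + c (x', y))))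
        * (d (x, y') * d (x', y))"
      by (simp add: eval_nat_numeral lessThan_Suc algebra_simps)
    have lnE: "ln (d (x, y) * d (x', y')) = ln (exp (- (1 / \<epsilon>) * ((c (x, y) + c (x', y')) - (c (x, y') + c (x', y))))
        * (d (x, y') * d (x', y)))" using e by simp
    then have "ln (d (x, y)) + ln (d (x', y')) = - (1 / \<epsilon>) * ((c (x, y) + c (x', y')) - (c (x, y') + c (x', y)))
        + (ln (d (x, y')) + ln (d (x', y)))"
    proof -
      have p: "d (x, y) > 0" "d (x', y') > 0" "d (x, y') > 0" "d (x', y) > 0" using pos by auto
      have "ln (d (x, y) * d (x', y')) = ln (d (x, y)) + ln (d (x', y'))" using p by (simp add: ln_mult)
      moreover have "ln (exp (- (1 / \<epsilon>) * ((c (x, y) + c (x', y')) - (c (x, y') + c (x', y))))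
        * (d (x, y') * d (x', y))) = - (1 / \<epsilon>) * ((c (x, y) + c (x', y')) - (c (x, y') + c (x', y)))
        + (ln (d (x, y')) + ln (d (x', y)))" using p by (simp add: ln_mult del: mult_minus_left)
      ultimately show ?thesis using lnE by simp
    qed
    then show ?thesis unfolding w_def by (simp add: algebra_simps add_divide_distrib diff_divide_distrib)
  qed
  define x0 :: 'a where "x0 = undefined"
  define y0 :: 'b where "y0 = undefined"
  have wsplit: "w (x, y) = w (x, y0) + w (x0, y) - w (x0, y0)" for x y
    using two[of x y x0 y0] by simp
  have "(\<Sum>i<k. w (xs i, ys (\<sigma> i))) = (\<Sum>i<k. w (xs i, y0)) + (\<Sum>i<k. w (x0, ys (\<sigma> i))) - (\<Sum>i<k. w (x0, y0))"
    by (simp add: wsplit[of "xs _" "ys _"] sum.distrib sum_subtractf)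
  also have "(\<Sum>i<k. w (x0, ys (\<sigma> i))) = (\<Sum>i<k. w (x0, ys i))"
    using sum.permute[OF \<sigma>, of "\<lambda>i. w (x0, ys i)"] by (simp add: comp_def)
  also have "(\<Sum>i<k. w (xs i, y0)) + (\<Sum>i<k. w (x0, ys i)) - (\<Sum>i<k. w (x0, y0)) = (\<Sum>i<k. w (xs i, ys i))"
    by (simp add: wsplit[of "xs _" "ys _"] sum.distrib sum_subtractf)
  finally have ws: "(\<Sum>i<k. w (xs i, ys (\<sigma> i))) = (\<Sum>i<k. w (xs i, ys i))" .
  have lnrel: "(\<Sum>i<k. ln (d (xs i, ys i))) = - (1 / \<epsilon>) * ((\<Sum>i<k. c (xs i, ys i)) - (\<Sum>i<k. c (xs i, ys (\<sigma> i))))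
      + (\<Sum>i<k. ln (d (xs i, ys (\<sigma> i))))"
  proof -
    have h1: "(\<Sum>i<k. ln (d (xs i, ys (\<sigma> i)))) + (\<Sum>i<k. c (xs i, ys (\<sigma> i))) / \<epsilon>
        = (\<Sum>i<k. ln (d (xs i, ys i))) + (\<Sum>i<k. c (xs i, ys i)) / \<epsilon>"
      using ws unfolding w_def by (simp add: sum.distrib sum_divide_distrib)
    have h2: "- (1 / \<epsilon>) * ((\<Sum>i<k. c (xs i, ys i)) - (\<Sum>i<k. c (xs i, ys (\<sigma> i))))
        = (\<Sum>i<k. c (xs i, ys (\<sigma> i))) / \<epsilon> - (\<Sum>i<k. c (xs i, ys i)) / \<epsilon>"
      by (simp add: diff_divide_distrib[symmetric] minus_divide_left[symmetric] algebra_simps)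
    show ?thesis using h1 h2 by linarith
  qed
  have "(\<Prod>i<k. d (xs i, ys i)) = exp (\<Sum>i<k. ln (d (xs i, ys i)))"
    using pos by (simp add: exp_sum)
  also have "\<dots> = exp (- (1 / \<epsilon>) * ((\<Sum>i<k. c (xs i, ys i)) - (\<Sum>i<k. c (xs i, ys (\<sigma> i)))))
      * exp (\<Sum>i<k. ln (d (xs i, ys (\<sigma> i))))" unfolding lnrel by (rule exp_add)
  also have "exp (\<Sum>i<k. ln (d (xs i, ys (\<sigma> i)))) = (\<Prod>i<k. d (xs i, ys (\<sigma> i)))"
    using pos by (simp add: exp_sum)
  finally show ?thesis .
qed



lemma weak_lower:
  fixes \<pi> :: "real \<Rightarrow> ('c::metric_space) measure" and \<pi>s :: "'c measure"
  assumes wc: "weak_conv_at0 \<pi> \<pi>s" and ps: "prob_space \<pi>s" and ss: "sets \<pi>s = sets borel"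
    and pe: "\<forall>\<epsilon>>0. prob_space (\<pi> \<epsilon>) \<and> sets (\<pi> \<epsilon>) = sets borel"
    and p: "p \<in> spt \<pi>s" and r: "r > 0"
  shows "\<exists>L>0. eventually (\<lambda>\<epsilon>. L \<le> measure (\<pi> \<epsilon>) (ball p r)) (at_right 0)"
proof -
  define f where "f z = max 0 (r - dist z p)" for z
  have fc: "continuous_on UNIV f" unfolding f_def by (intro continuous_intros)
  have fb: "bounded (range f)" unfolding bounded_iff f_def
    using r by (intro exI[of _ r]) (auto simp: abs_if)
  have fm: "f \<in> borel_measurable borel" using fc by (rule borel_measurable_continuous_onI)
  have lim: "((\<lambda>\<epsilon>. integral\<^sup>L (\<pi> \<epsilon>) f) \<longlongrightarrow> integral\<^sup>L \<pi>s f) (at_right 0)"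
    using wc unfolding weak_conv_at0_def using fc fb by simp
  interpret S: prob_space \<pi>s by (rule ps)
  have fms: "f \<in> borel_measurable \<pi>s" unfolding measurable_cong_sets[OF ss refl] by (rule fm)
  have ballm: "ball p (r/2) \<in> sets \<pi>s" unfolding ss by simp
  have intf: "integrable \<pi>s f"
    by (rule S.integrable_const_bound[where B=r]) (use r in \<open>auto simp: f_def fms\<close>)
  have "\<forall>U. open U \<longrightarrow> p \<in> U \<longrightarrow> 0 < emeasure \<pi>s U" using p by (simp add: spt_def)
  then have "emeasure \<pi>s (ball p (r/2)) > 0" using r by simp
  then have mpos: "measure \<pi>s (ball p (r/2)) > 0"
    by (simp add: S.emeasure_eq_measure)
  have "(r/2) * measure \<pi>s (ball p (r/2)) = integral\<^sup>L \<pi>s (\<lambda>z. (r/2) * indicator (ball p (r/2)) z)"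
    using ballm by simp
  also have "\<dots> \<le> integral\<^sup>L \<pi>s f"
  proof (rule integral_mono)
    show "integrable \<pi>s (\<lambda>z. r / 2 * indicator (ball p (r / 2)) z)"
      using ballm by (intro integrable_mult_right integrable_real_indicator) (auto simp: S.emeasure_eq_measure)
    show "integrable \<pi>s f" by (rule intf)
    fix z show "r / 2 * indicator (ball p (r / 2)) z \<le> f z"
      using r by (cases "z \<in> ball p (r/2)") (auto simp: f_def dist_commute)
  qed
  finally have Ile: "(r/2) * measure \<pi>s (ball p (r/2)) \<le> integral\<^sup>L \<pi>s f" .
  have "0 < (r/2) * measure \<pi>s (ball p (r/2))" using mpos r by (intro mult_pos_pos) auto
  with Ile have Ipos: "integral\<^sup>L \<pi>s f > 0" by linarith
  have ev1: "eventually (\<lambda>\<epsilon>. integral\<^sup>L (\<pi> \<epsilon>) f > integral\<^sup>L \<pi>s f / 2) (at_right 0)"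
    using lim Ipos by (intro order_tendstoD(1)) auto
  have ev2: "eventually (\<lambda>\<epsilon>. \<epsilon> > (0::real)) (at_right 0)"
    by (simp add: eventually_at_right_less)
  have "eventually (\<lambda>\<epsilon>. integral\<^sup>L \<pi>s f / (2 * r) \<le> measure (\<pi> \<epsilon>) (ball p r)) (at_right 0)"
    using ev1 ev2
  proof eventually_elim
    case (elim \<epsilon>)
    then interpret E: prob_space "\<pi> \<epsilon>" using pe by auto
    have se: "sets (\<pi> \<epsilon>) = sets borel" using pe elim by auto
    have fme: "f \<in> borel_measurable (\<pi> \<epsilon>)" unfolding measurable_cong_sets[OF se refl] by (rule fm)
    have ballme: "ball p r \<in> sets (\<pi> \<epsilon>)" unfolding se by simp
    have "integral\<^sup>L (\<pi> \<epsilon>) f \<le> integral\<^sup>L (\<pi> \<epsilon>) (\<lambda>z. r * indicator (ball p r) z)"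
    proof (rule integral_mono)
      show "integrable (\<pi> \<epsilon>) (\<lambda>z. r * indicator (ball p r) z)"
        using ballme by (intro integrable_mult_right integrable_real_indicator) (auto simp: E.emeasure_eq_measure)
      show "integrable (\<pi> \<epsilon>) f"
          by (rule E.integrable_const_bound[where B=r]) (use r in \<open>auto simp: f_def fme\<close>)
      fix z show "f z \<le> r * indicator (ball p r) z"
        using r by (cases "z \<in> ball p r") (auto simp: f_def dist_commute)
    qed
    also have "\<dots> = r * measure (\<pi> \<epsilon>) (ball p r)" using ballme by simp
    finally show ?case using elim(1) r by (simp add: field_simps)
  qed
  then show ?thesis using Ipos r by (intro exI[of _ "integral\<^sup>L \<pi>s f / (2 * r)"]) auto
qed



lemma dist_pair_le: "dist (a, b) (c, d) \<le> dist a c + dist b d"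
  unfolding dist_Pair_Pair
  using sqrt_sum_squares_le_sum_abs[of "dist a c" "dist b d"] by simp

lemma cm_spt:
  fixes \<mu> :: "'a::polish_space measure" and \<nu> :: "'b::polish_space measure"
    and c :: "'a \<times> 'b \<Rightarrow> real"
    and \<pi> :: "real \<Rightarrow> ('a \<times> 'b) measure" and \<pi>s :: "('a \<times> 'b) measure" and k :: nat
  assumes pmu: "prob_space \<mu>" and smu: "sets \<mu> = sets borel"
    and pnu: "prob_space \<nu>" and snu: "sets \<nu> = sets borel"
    and cc: "continuous_on UNIV c"
    and pe: "\<forall>\<epsilon>>0. \<pi> \<epsilon> \<in> couplings \<mu> \<nu> \<and> cyc_invariant c \<epsilon> \<mu> \<nu> (\<pi> \<epsilon>)"
    and ps: "\<pi>s \<in> couplings \<mu> \<nu>" and wc: "weak_conv_at0 \<pi> \<pi>s"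
    and \<sigma>: "\<sigma> permutes {..<k}" and inS: "\<forall>i<k. (xs i, ys i) \<in> spt \<pi>s"
  shows "(\<Sum>i<k. c (xs i, ys i)) \<le> (\<Sum>i<k. c (xs i, ys (\<sigma> i)))"
proof (rule ccontr)
  assume neg: "\<not> ?thesis"
  define \<delta> where "\<delta> = (\<Sum>i<k. c (xs i, ys i)) - (\<Sum>i<k. c (xs i, ys (\<sigma> i)))"
  have \<delta>pos: "\<delta> > 0" using neg unfolding \<delta>_def by linarith
  have kpos: "k > 0" using \<delta>pos unfolding \<delta>_def by (cases k) auto
  define \<eta> where "\<eta> = \<delta> / (4 * real k)"
  have \<eta>pos: "\<eta> > 0" using \<delta>pos kpos unfolding \<eta>_def by simp
  have "\<forall>p. \<exists>s>0. \<forall>z. dist z p < s \<longrightarrow> dist (c z) (c p) < \<eta>"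
    using cc \<eta>pos unfolding continuous_on_iff by blast
  then obtain rr where rr: "\<And>p. rr p > 0" "\<And>p z. dist z p < rr p \<Longrightarrow> dist (c z) (c p) < \<eta>"
    by metis
  define Pts where "Pts = (\<lambda>i. (xs i, ys i)) ` {..<k} \<union> (\<lambda>i. (xs i, ys (\<sigma> i))) ` {..<k}"
  have finPts: "finite Pts" unfolding Pts_def by simp
  have nePts: "Pts \<noteq> {}" unfolding Pts_def using kpos by auto
  define r where "r = Min (rr ` Pts) / 2"
  have rpos: "r > 0" unfolding r_def using finPts nePts rr(1) by (simp add: Min_gr_iff)
  have rle: "2 * r \<le> rr p" if "p \<in> Pts" for p
    unfolding r_def using finPts that by (simp add: Min_le)
  define B where "B i = ball (xs i, ys i) r" for i
  have gap: "\<delta> / 2 \<le> (\<Sum>i<k. c (xs' i, ys' i)) - (\<Sum>i<k. c (xs' i, ys' (\<sigma> i)))"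
    if H: "\<forall>i<k. (xs' i, ys' i) \<in> B i" for xs' ys'
  proof -
    have dd: "dist (xs' i) (xs i) < r" "dist (ys' i) (ys i) < r" if "i < k" for i
    proof -
      have "dist (xs' i, ys' i) (xs i, ys i) < r" using H that unfolding B_def by (simp add: dist_commute)
      then show "dist (xs' i) (xs i) < r" "dist (ys' i) (ys i) < r"
        using dist_fst_le[of "(xs' i, ys' i)" "(xs i, ys i)"] dist_snd_le[of "(xs' i, ys' i)" "(xs i, ys i)"]
        by auto
    qed
    have a: "c (xs i, ys i) - \<eta> \<le> c (xs' i, ys' i)" if i: "i < k" for i
    proof -
      have "(xs i, ys i) \<in> Pts" unfolding Pts_def using i by auto
      then have "2 * r \<le> rr (xs i, ys i)" by (rule rle)
      moreover have "dist (xs' i, ys' i) (xs i, ys i) < r" using H i unfolding B_def by (simp add: dist_commute)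
      ultimately have "dist (xs' i, ys' i) (xs i, ys i) < rr (xs i, ys i)" using rpos by linarith
      then have "dist (c (xs' i, ys' i)) (c (xs i, ys i)) < \<eta>" by (rule rr(2))
      then show ?thesis by (simp add: dist_real_def)
    qed
    have b: "c (xs' i, ys' (\<sigma> i)) \<le> c (xs i, ys (\<sigma> i)) + \<eta>" if i: "i < k" for i
    proof -
      have si: "\<sigma> i < k" using permutes_in_image[OF \<sigma>] i by auto
      have "(xs i, ys (\<sigma> i)) \<in> Pts" unfolding Pts_def using i by auto
      then have "2 * r \<le> rr (xs i, ys (\<sigma> i))" by (rule rle)
      moreover have "dist (xs' i, ys' (\<sigma> i)) (xs i, ys (\<sigma> i)) < 2 * r"
        using dist_pair_le[of "xs' i" "ys' (\<sigma> i)" "xs i" "ys (\<sigma> i)"] dd(1)[OF i] dd(2)[OF si] by linarith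
      ultimately have "dist (xs' i, ys' (\<sigma> i)) (xs i, ys (\<sigma> i)) < rr (xs i, ys (\<sigma> i))" by linarith
      then have "dist (c (xs' i, ys' (\<sigma> i))) (c (xs i, ys (\<sigma> i))) < \<eta>" by (rule rr(2))
      then show ?thesis by (simp add: dist_real_def)
    qed
    have "(\<Sum>i<k. c (xs i, ys i) - \<eta>) \<le> (\<Sum>i<k. c (xs' i, ys' i))" using a by (intro sum_mono) auto
    moreover have "(\<Sum>i<k. c (xs' i, ys' (\<sigma> i))) \<le> (\<Sum>i<k. c (xs i, ys (\<sigma> i)) + \<eta>)" using b by (intro sum_mono) auto
    moreover have "real k * \<eta> = \<delta> / 4" unfolding \<eta>_def using kpos by simp
    moreover have "(\<Sum>i<k. c (xs i, ys i) - \<eta>) = (\<Sum>i<k. c (xs i, ys i)) - real k * \<eta>"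
      by (simp add: sum_subtractf)
    moreover have "(\<Sum>i<k. c (xs i, ys (\<sigma> i)) + \<eta>) = (\<Sum>i<k. c (xs i, ys (\<sigma> i))) + real k * \<eta>"
      by (simp add: sum.distrib)
    ultimately show ?thesis unfolding \<delta>_def by argo
  qed
  define P where "P = \<mu> \<Otimes>\<^sub>M \<nu>"
  have sP: "sets P = sets borel"
  proof -
    have "sets P = sets (borel \<Otimes>\<^sub>M borel)" unfolding P_def by (rule sets_pair_measure_cong[OF smu snu])
    then show ?thesis by (simp only: borel_prod)
  qed
  have Bm: "B i \<in> sets P" for i unfolding sP B_def by simp
  have sfmu: "sigma_finite_measure \<mu>" by (rule subprob_space_imp_sigma_finite[OF prob_space_imp_subprob_space[OF pmu]])
  have sfnu: "sigma_finite_measure \<nu>" by (rule subprob_space_imp_sigma_finite[OF prob_space_imp_subprob_space[OF pnu]])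
  have pse: "prob_space \<pi>s \<and> sets \<pi>s = sets borel" using ps unfolding couplings_def by auto
  have pee: "\<forall>\<epsilon>>0. prob_space (\<pi> \<epsilon>) \<and> sets (\<pi> \<epsilon>) = sets borel" using pe unfolding couplings_def by auto
  have "\<forall>i\<in>{..<k}. \<exists>L>0. eventually (\<lambda>\<epsilon>. L \<le> measure (\<pi> \<epsilon>) (B i)) (at_right 0)"
  proof
    fix i assume "i \<in> {..<k}"
    then have "(xs i, ys i) \<in> spt \<pi>s" using inS by auto
    then show "\<exists>L>0. eventually (\<lambda>\<epsilon>. L \<le> measure (\<pi> \<epsilon>) (B i)) (at_right 0)"
      unfolding B_def using weak_lower[OF wc _ _ pee _ rpos] pse by blast
  qed
  then obtain L where L: "\<forall>i\<in>{..<k}. L i > 0 \<and> eventually (\<lambda>\<epsilon>. L i \<le> measure (\<pi> \<epsilon>) (B i)) (at_right 0)"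
    by (metis bchoice)
  have Lprod: "(\<Prod>i<k. L i) > 0" using L by (intro prod_pos) auto
  have ev1: "eventually (\<lambda>\<epsilon>. \<forall>i\<in>{..<k}. L i \<le> measure (\<pi> \<epsilon>) (B i)) (at_right 0)"
    using L by (intro eventually_ball_finite) auto
  have lim: "((\<lambda>\<epsilon>. exp (- \<delta> / (2 * \<epsilon>))) \<longlongrightarrow> 0) (at_right 0)"
    using \<delta>pos by real_asymp
  have ev2: "eventually (\<lambda>\<epsilon>. exp (- \<delta> / (2 * \<epsilon>)) < (\<Prod>i<k. L i)) (at_right 0)"
    using lim Lprod by (rule order_tendstoD(2))
  have ev3: "eventually (\<lambda>\<epsilon>. \<epsilon> > (0::real)) (at_right 0)"
    by (simp add: eventually_at_right_less)
  have "eventually (\<lambda>\<epsilon>. (\<forall>i\<in>{..<k}. L i \<le> measure (\<pi> \<epsilon>) (B i)) \<and> exp (- \<delta> / (2 * \<epsilon>)) < (\<Prod>i<k. L i) \<and> \<epsilon> > 0) (at_right 0)"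
    using ev1 ev2 ev3 by (intro eventually_conj) auto
  then obtain \<epsilon> where \<epsilon>: "\<forall>i\<in>{..<k}. L i \<le> measure (\<pi> \<epsilon>) (B i)" "exp (- \<delta> / (2 * \<epsilon>)) < (\<Prod>i<k. L i)" "\<epsilon> > 0"
    using eventually_happens'[OF trivial_limit_at_right_real] by blast
  have "\<pi> \<epsilon> \<in> couplings \<mu> \<nu> \<and> cyc_invariant c \<epsilon> \<mu> \<nu> (\<pi> \<epsilon>)" using pe \<epsilon>(3) by auto
  then obtain d where dm: "d \<in> borel_measurable P" and dpos: "\<forall>z. d z > 0"
      and dens: "\<pi> \<epsilon> = density P (\<lambda>z. ennreal (d z))"
      and cyc: "\<forall>(k::nat) (xs :: nat \<Rightarrow> 'a) (ys :: nat \<Rightarrow> 'b). k \<ge> 1 \<longrightarrow>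
           (\<Prod>i<k. d (xs i, ys i)) =
             exp (- (1 / \<epsilon>) * ((\<Sum>i<k. c (xs i, ys i)) - (\<Sum>i<k. c (xs i, ys (Suc i mod k)))))
             * (\<Prod>i<k. d (xs i, ys (Suc i mod k)))"
      and pre: "prob_space (\<pi> \<epsilon>)"
    unfolding cyc_invariant_def couplings_def P_def by blast
  interpret E: prob_space "\<pi> \<epsilon>" by (rule pre)
  have [measurable]: "d \<in> borel_measurable P" by (rule dm)
  have [measurable]: "B i \<in> sets P" for i by (rule Bm)
  have emB: "emeasure (\<pi> \<epsilon>) (B i) = (\<integral>\<^sup>+z. ennreal (d z) * indicator (B i) z \<partial>P)" for i
    unfolding dens using Bm by (simp add: emeasure_density)
  have tot: "(\<integral>\<^sup>+z. ennreal (d z) \<partial>P) = 1"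
  proof -
    have "1 = emeasure (\<pi> \<epsilon>) (space (\<pi> \<epsilon>))" by (simp add: E.emeasure_space_1)
    also have "\<dots> = emeasure (\<pi> \<epsilon>) (space P)" unfolding dens by simp
    also have "\<dots> = (\<integral>\<^sup>+z. ennreal (d z) * indicator (space P) z \<partial>P)"
      unfolding dens by (simp add: emeasure_density)
    also have "\<dots> = (\<integral>\<^sup>+z. ennreal (d z) \<partial>P)"
      by (rule nn_integral_cong) simp
    finally show ?thesis by simp
  qed
  define e0 where "e0 = exp (- \<delta> / (2 * \<epsilon> * real k))"
  have e0pos: "e0 > 0" unfolding e0_def by simp
  have e0k: "e0 ^ k = exp (- \<delta> / (2 * \<epsilon>))"
  proof -
    have "e0 ^ k = exp (real k * (- \<delta> / (2 * \<epsilon> * real k)))" unfolding e0_def by (rule exp_of_nat_mult[symmetric])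
    also have "real k * (- \<delta> / (2 * \<epsilon> * real k)) = - \<delta> / (2 * \<epsilon>)" using kpos by (simp add: field_simps)
    finally show ?thesis .
  qed
  define MX where "MX = PiM {..<k} (\<lambda>_. \<mu>)"
  define MY where "MY = PiM {..<k} (\<lambda>_. \<nu>)"
  have "(\<Prod>i<k. emeasure (\<pi> \<epsilon>) (B i)) = (\<Prod>i<k. \<integral>\<^sup>+z. ennreal (d z) * indicator (B i) z \<partial>P)"
    by (simp add: emB)
  also have "\<dots> = (\<integral>\<^sup>+xs'. \<integral>\<^sup>+ys'. (\<Prod>i<k. ennreal (d (xs' i, ys' (id i))) * indicator (B i) (xs' i, ys' (id i))) \<partial>MY \<partial>MX)"
    unfolding MX_def MY_def P_def
    by (rule prod_fubini_perm[OF sfmu sfnu _ permutes_id, symmetric]) (simp add: P_def[symmetric])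
  also have "\<dots> \<le> (\<integral>\<^sup>+xs'. \<integral>\<^sup>+ys'. (\<Prod>i<k. ennreal (e0 * d (xs' i, ys' (\<sigma> i)))) \<partial>MY \<partial>MX)"
  proof (intro nn_integral_mono)
    fix xs' ys'
    show "(\<Prod>i<k. ennreal (d (xs' i, ys' (id i))) * indicator (B i) (xs' i, ys' (id i)))
        \<le> (\<Prod>i<k. ennreal (e0 * d (xs' i, ys' (\<sigma> i))))"
    proof (cases "\<forall>i<k. (xs' i, ys' i) \<in> B i")
      case True
      have "(\<Prod>i<k. ennreal (d (xs' i, ys' (id i))) * indicator (B i) (xs' i, ys' (id i)))
          = (\<Prod>i<k. ennreal (d (xs' i, ys' i)))" using True by (intro prod.cong) auto
      also have "\<dots> = ennreal (\<Prod>i<k. d (xs' i, ys' i))" using dpos by (intro prod_ennreal) (auto intro: less_imp_le)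
      also have "(\<Prod>i<k. d (xs' i, ys' i)) =
          exp (- (1 / \<epsilon>) * ((\<Sum>i<k. c (xs' i, ys' i)) - (\<Sum>i<k. c (xs' i, ys' (\<sigma> i)))))
            * (\<Prod>i<k. d (xs' i, ys' (\<sigma> i)))"
        by (rule perm_identity[OF dpos cyc \<sigma>])
      also have "\<dots> \<le> exp (- \<delta> / (2 * \<epsilon>)) * (\<Prod>i<k. d (xs' i, ys' (\<sigma> i)))"
      proof (rule mult_right_mono)
        have "\<delta> / 2 \<le> (\<Sum>i<k. c (xs' i, ys' i)) - (\<Sum>i<k. c (xs' i, ys' (\<sigma> i)))" using gap True by blast
        then have "- (1 / \<epsilon>) * ((\<Sum>i<k. c (xs' i, ys' i)) - (\<Sum>i<k. c (xs' i, ys' (\<sigma> i)))) \<le> - \<delta> / (2 * \<epsilon>)"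
          using \<epsilon>(3) by (simp add: field_simps)
        then show "exp (- (1 / \<epsilon>) * ((\<Sum>i<k. c (xs' i, ys' i)) - (\<Sum>i<k. c (xs' i, ys' (\<sigma> i))))) \<le> exp (- \<delta> / (2 * \<epsilon>))"
          by simp
        show "0 \<le> (\<Prod>i<k. d (xs' i, ys' (\<sigma> i)))" using dpos by (intro prod_nonneg) (auto intro: less_imp_le)
      qed
      also have "\<dots> = (\<Prod>i<k. e0 * d (xs' i, ys' (\<sigma> i)))" by (simp add: prod.distrib e0k)
      finally have le: "(\<Prod>i<k. ennreal (d (xs' i, ys' (id i))) * indicator (B i) (xs' i, ys' (id i)))
          \<le> ennreal (\<Prod>i<k. e0 * d (xs' i, ys' (\<sigma> i)))" by (metis ennreal_leI)
      also have "\<dots> = (\<Prod>i<k. ennreal (e0 * d (xs' i, ys' (\<sigma> i))))"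
        using dpos e0pos by (intro prod_ennreal[symmetric]) (auto intro: less_imp_le)
      finally show ?thesis .
    next
      case False
      then obtain j where j: "j < k" "(xs' j, ys' j) \<notin> B j" by auto
      have "(\<Prod>i<k. ennreal (d (xs' i, ys' (id i))) * indicator (B i) (xs' i, ys' (id i))) = 0"
        using j by (intro prod_zero) (auto intro!: bexI[of _ j])
      then show ?thesis by (metis zero_le)
    qed
  qed
  also have "\<dots> = (\<Prod>i<k. \<integral>\<^sup>+z. ennreal (e0 * d z) \<partial>P)"
    unfolding MX_def MY_def P_def
    by (rule prod_fubini_perm[OF sfmu sfnu _ \<sigma>]) (simp add: P_def[symmetric])
  also have "\<dots> = (\<Prod>i<k. ennreal e0)"
  proof (rule prod.cong[OF refl])
    fix i
    have "(\<integral>\<^sup>+z. ennreal (e0 * d z) \<partial>P) = (\<integral>\<^sup>+z. ennreal e0 * ennreal (d z) \<partial>P)"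
      using e0pos dpos by (intro nn_integral_cong ennreal_mult) (auto intro: less_imp_le)
    also have "\<dots> = ennreal e0 * (\<integral>\<^sup>+z. ennreal (d z) \<partial>P)" by (rule nn_integral_cmult) simp
    finally show "(\<integral>\<^sup>+z. ennreal (e0 * d z) \<partial>P) = ennreal e0" by (simp add: tot)
  qed
  also have "\<dots> = ennreal (exp (- \<delta> / (2 * \<epsilon>)))"
    by (simp only: prod_constant card_lessThan ennreal_power[OF less_imp_le[OF e0pos]] e0k)
  finally have bound: "(\<Prod>i<k. emeasure (\<pi> \<epsilon>) (B i)) \<le> ennreal (exp (- \<delta> / (2 * \<epsilon>)))" .
  have "(\<Prod>i<k. emeasure (\<pi> \<epsilon>) (B i)) = ennreal (\<Prod>i<k. measure (\<pi> \<epsilon>) (B i))"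
    by (simp add: E.emeasure_eq_measure prod_ennreal)
  with bound have "(\<Prod>i<k. measure (\<pi> \<epsilon>) (B i)) \<le> exp (- \<delta> / (2 * \<epsilon>))" by simp
  moreover have "(\<Prod>i<k. L i) \<le> (\<Prod>i<k. measure (\<pi> \<epsilon>) (B i))"
    using L \<epsilon>(1) by (intro prod_mono) (auto intro: less_imp_le)
  ultimately show False using \<epsilon>(2) by linarith
qed



definition cmono :: "('a \<times> 'b \<Rightarrow> real) \<Rightarrow> ('a \<times> 'b) set \<Rightarrow> bool" where
  "cmono c \<Gamma> \<longleftrightarrow> (\<forall>(k::nat) xs ys \<sigma>. \<sigma> permutes {..<k} \<and> (\<forall>i<k. (xs i, ys i) \<in> \<Gamma>) \<longrightarrow>
      (\<Sum>i<k. c (xs i, ys i)) \<le> (\<Sum>i<k. c (xs i, ys (\<sigma> i))))"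

definition Ival :: "('a \<times> 'b \<Rightarrow> real) \<Rightarrow> nat \<Rightarrow> (nat \<Rightarrow> 'a) \<Rightarrow> (nat \<Rightarrow> 'b) \<Rightarrow> (nat \<Rightarrow> nat) \<Rightarrow> real" where
  "Ival c k xs ys \<sigma> = (\<Sum>i<k. c (xs i, ys i)) - (\<Sum>i<k. c (xs i, ys (\<sigma> i)))"

lemma Ifun_ge:
  assumes "2 \<le> k" "xs 0 = x" "ys 0 = y" "\<forall>i\<in>{1..<k}. (xs i, ys i) \<in> \<Gamma>" "\<sigma> permutes {..<k}"
  shows "ereal (Ival c k xs ys \<sigma>) \<le> Ifun c \<Gamma> x y"
  unfolding Ifun_def Ival_def by (rule SUP_upper) (use assms in blast)

lemma Ifun_le:
  assumes "\<And>k xs ys \<sigma>. 2 \<le> k \<Longrightarrow> xs 0 = x \<Longrightarrow> ys 0 = y \<Longrightarrow> \<forall>i\<in>{1..<k}. (xs i, ys i) \<in> \<Gamma>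
      \<Longrightarrow> \<sigma> permutes {..<k} \<Longrightarrow> ereal (Ival c k xs ys \<sigma>) \<le> B"
  shows "Ifun c \<Gamma> x y \<le> B"
  unfolding Ifun_def by (rule SUP_least) (use assms in \<open>auto simp: Ival_def\<close>)

lemma sum_split0: "0 < (k::nat) \<Longrightarrow> (\<Sum>i<k. f i) = f 0 + (\<Sum>i\<in>{1..<k}. f i)"
  by (simp add: lessThan_atLeast0 sum.atLeast_Suc_lessThan)

lemma Ival_bound:
  assumes cm: "cmono c \<Gamma>" and h1: "(x, y') \<in> \<Gamma>" and h2: "(x', y) \<in> \<Gamma>" and k: "1 \<le> k"
    and x: "xs 0 = x" and y: "ys 0 = y" and G: "\<forall>i\<in>{1..<k}. (xs i, ys i) \<in> \<Gamma>"
    and \<sigma>: "\<sigma> permutes {..<k}"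
  shows "Ival c k xs ys \<sigma> \<le> c (x, y) + c (x', y') - c (x, y') - c (x', y)"
proof -
  define xs2 where "xs2 = xs(k := x')"
  define ys2 where "ys2 = (ys(0 := y'))(k := y)"
  define \<sigma>2 where "\<sigma>2 = Transposition.transpose 0 k \<circ> \<sigma>"
  have k0: "k \<noteq> 0" using k by simp
  have \<sigma>S: "\<sigma> permutes {..<Suc k}" using \<sigma> by (rule permutes_subset) auto
  have tS: "Transposition.transpose 0 k permutes {..<Suc k}" by (rule permutes_swap_id) auto
  have \<sigma>2S: "\<sigma>2 permutes {..<Suc k}" unfolding \<sigma>2_def by (rule permutes_compose[OF \<sigma>S tS])
  have \<sigma>k: "\<sigma> k = k" using permutes_not_in[OF \<sigma>] by simp
  have \<sigma>lt: "\<sigma> i < k" if "i < k" for i using permutes_in_image[OF \<sigma>] that by simp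
  have inG: "\<forall>i<Suc k. (xs2 i, ys2 i) \<in> \<Gamma>"
  proof (intro allI impI)
    fix i assume i: "i < Suc k"
    show "(xs2 i, ys2 i) \<in> \<Gamma>"
    proof (cases "i = k")
      case True then show ?thesis using h2 by (simp add: xs2_def ys2_def)
    next
      case False
      show ?thesis
      proof (cases "i = 0")
        case True then show ?thesis using h1 x k0 by (simp add: xs2_def ys2_def)
      next
        case False2: False
        then show ?thesis using G i False by (simp add: xs2_def ys2_def)
      qed
    qed
  qed
  have main: "(\<Sum>i<Suc k. c (xs2 i, ys2 i)) \<le> (\<Sum>i<Suc k. c (xs2 i, ys2 (\<sigma>2 i)))"
    using cm \<sigma>2S inG unfolding cmono_def by blast
  have L: "(\<Sum>i<Suc k. c (xs2 i, ys2 i)) = c (x, y') + (\<Sum>i\<in>{1..<k}. c (xs i, ys i)) + c (x', y)"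
  proof -
    have "(\<Sum>i<Suc k. c (xs2 i, ys2 i)) = (\<Sum>i<k. c (xs2 i, ys2 i)) + c (x', y)"
      by (simp add: xs2_def ys2_def)
    also have "(\<Sum>i<k. c (xs2 i, ys2 i)) = c (xs2 0, ys2 0) + (\<Sum>i\<in>{1..<k}. c (xs2 i, ys2 i))"
      using k by (intro sum_split0) simp
    also have "(\<Sum>i\<in>{1..<k}. c (xs2 i, ys2 i)) = (\<Sum>i\<in>{1..<k}. c (xs i, ys i))"
      by (intro sum.cong) (auto simp: xs2_def ys2_def)
    finally show ?thesis using k0 x by (simp add: xs2_def ys2_def)
  qed
  have R: "(\<Sum>i<Suc k. c (xs2 i, ys2 (\<sigma>2 i))) = (\<Sum>i<k. c (xs i, ys (\<sigma> i))) + c (x', y')"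
  proof -
    have "(\<Sum>i<Suc k. c (xs2 i, ys2 (\<sigma>2 i))) = (\<Sum>i<k. c (xs2 i, ys2 (\<sigma>2 i))) + c (xs2 k, ys2 (\<sigma>2 k))"
      by simp
    also have "c (xs2 k, ys2 (\<sigma>2 k)) = c (x', y')"
      using \<sigma>k k0 by (simp add: xs2_def ys2_def \<sigma>2_def)
    also have "(\<Sum>i<k. c (xs2 i, ys2 (\<sigma>2 i))) = (\<Sum>i<k. c (xs i, ys (\<sigma> i)))"
    proof (intro sum.cong refl)
      fix i assume "i \<in> {..<k}"
      then have i: "i < k" by simp
      have "ys2 (\<sigma>2 i) = ys (\<sigma> i)"
      proof (cases "\<sigma> i = 0")
        case True then show ?thesis using y k0 by (simp add: ys2_def \<sigma>2_def)
      next
        case False then show ?thesis using \<sigma>lt[OF i] by (simp add: ys2_def \<sigma>2_def Transposition.transpose_def)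
      qed
      then show "c (xs2 i, ys2 (\<sigma>2 i)) = c (xs i, ys (\<sigma> i))" using i by (simp add: xs2_def)
    qed
    finally show ?thesis .
  qed
  have "(\<Sum>i<k. c (xs i, ys i)) = c (x, y) + (\<Sum>i\<in>{1..<k}. c (xs i, ys i))"
    using k x y by (subst sum_split0) auto
  then show ?thesis using main L R unfolding Ival_def by linarith
qed



lemma conj_le: "c_conj c \<psi> y \<le> \<psi> x + ereal (c (x, y))"
  unfolding c_conj_def by (rule INF_lower) simp

lemma pot_fin:
  assumes kp: "kantorovich_potential c \<Gamma> \<psi>" and g: "(x0, y0) \<in> \<Gamma>"
  shows "\<psi> x0 = ereal (real_of_ereal (\<psi> x0))"
    and "c_conj c \<psi> y0 = ereal (real_of_ereal (\<psi> x0) + c (x0, y0))"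
proof -
  have n1: "\<psi> x0 \<noteq> -\<infinity>" using kp unfolding kantorovich_potential_def c_convex_def by blast
  have sd: "(x0, y0) \<in> c_subdiff c \<psi>" using kp g unfolding kantorovich_potential_def by blast
  then have n2: "\<psi> x0 < \<infinity>" and eq: "c_conj c \<psi> y0 - \<psi> x0 = ereal (c (x0, y0))"
    unfolding c_subdiff_def by auto
  obtain a where a: "\<psi> x0 = ereal a" using n1 n2 by (cases "\<psi> x0") auto
  then show "\<psi> x0 = ereal (real_of_ereal (\<psi> x0))" by simp
  show "c_conj c \<psi> y0 = ereal (real_of_ereal (\<psi> x0) + c (x0, y0))"
    using eq a by (cases "c_conj c \<psi> y0") auto
qed

lemma Ival_pot:
  assumes kp: "kantorovich_potential c \<Gamma> \<psi>" and x: "x \<in> fst ` \<Gamma>" and y: "y \<in> snd ` \<Gamma>"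
    and k: "2 \<le> k" and x0: "xs 0 = x" and y0: "ys 0 = y" and G: "\<forall>i\<in>{1..<k}. (xs i, ys i) \<in> \<Gamma>"
    and \<sigma>: "\<sigma> permutes {..<k}"
  shows "Ival c k xs ys \<sigma> \<le> c (x, y) - real_of_ereal (c_conj c \<psi> y) + real_of_ereal (\<psi> x)"
proof -
  define a where "a x = real_of_ereal (\<psi> x)" for x
  define b where "b y = real_of_ereal (c_conj c \<psi> y)" for y
  have aX: "\<psi> x' = ereal (a x')" if "x' \<in> fst ` \<Gamma>" for x'
    using that pot_fin(1)[OF kp] unfolding a_def by force
  have bG: "b y' = a x' + c (x', y')" if "(x', y') \<in> \<Gamma>" for x' y'
    using pot_fin(2)[OF kp that] unfolding a_def b_def by simp
  have bY: "c_conj c \<psi> y' = ereal (b y')" if yy: "y' \<in> snd ` \<Gamma>" for y'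
  proof -
    obtain x' where "(x', y') \<in> \<Gamma>" using yy by force
    then show ?thesis using pot_fin(2)[OF kp] unfolding b_def by force
  qed
  have ble: "b y' \<le> a x' + c (x', y')" if "x' \<in> fst ` \<Gamma>" "y' \<in> snd ` \<Gamma>" for x' y'
    using conj_le[of c \<psi> y' x'] aX[OF that(1)] bY[OF that(2)] by simp
  have xsX: "xs i \<in> fst ` \<Gamma>" if "i < k" for i
  proof (cases "i = 0")
    case True then show ?thesis using x x0 by simp
  next
    case False then have "(xs i, ys i) \<in> \<Gamma>" using G that by auto
    then show ?thesis by force
  qed
  have ysY: "ys i \<in> snd ` \<Gamma>" if "i < k" for i
  proof (cases "i = 0")
    case True then show ?thesis using y y0 by simp
  next
    case False then have "(xs i, ys i) \<in> \<Gamma>" using G that by auto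
    then show ?thesis by force
  qed
  have \<sigma>lt: "\<sigma> i < k" if "i < k" for i using permutes_in_image[OF \<sigma>] that by simp
  have s1: "(\<Sum>i<k. b (ys (\<sigma> i)) - a (xs i)) \<le> (\<Sum>i<k. c (xs i, ys (\<sigma> i)))"
    by (intro sum_mono) (use ble xsX ysY \<sigma>lt in \<open>auto simp: algebra_simps\<close>)
  have s2: "(\<Sum>i<k. b (ys (\<sigma> i)) - a (xs i)) = (\<Sum>i<k. b (ys i)) - (\<Sum>i<k. a (xs i))"
  proof -
    have "(\<Sum>i<k. b (ys (\<sigma> i))) = (\<Sum>i<k. b (ys i))"
      using sum.permute[OF \<sigma>, of "\<lambda>i. b (ys i)"] by (simp add: comp_def)
    then show ?thesis by (simp add: sum_subtractf)
  qed
  have k0: "0 < k" using k by simp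
  have s3: "(\<Sum>i<k. c (xs i, ys i)) = c (x, y) + (\<Sum>i\<in>{1..<k}. b (ys i) - a (xs i))"
  proof -
    have "(\<Sum>i<k. c (xs i, ys i)) = c (x, y) + (\<Sum>i\<in>{1..<k}. c (xs i, ys i))"
      using k0 x0 y0 by (subst sum_split0) auto
    also have "(\<Sum>i\<in>{1..<k}. c (xs i, ys i)) = (\<Sum>i\<in>{1..<k}. b (ys i) - a (xs i))"
    proof (intro sum.cong refl)
      fix i assume "i \<in> {1..<k}"
      then have "(xs i, ys i) \<in> \<Gamma>" using G by blast
      from bG[OF this] show "c (xs i, ys i) = b (ys i) - a (xs i)" by simp
    qed
    finally show ?thesis .
  qed
  have s4: "(\<Sum>i<k. b (ys i) - a (xs i)) = (b y - a x) + (\<Sum>i\<in>{1..<k}. b (ys i) - a (xs i))"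
    using k0 x0 y0 by (subst sum_split0) auto
  have s5: "(\<Sum>i<k. b (ys i) - a (xs i)) = (\<Sum>i<k. b (ys i)) - (\<Sum>i<k. a (xs i))"
    by (simp add: sum_subtractf)
  show ?thesis unfolding Ival_def using s1 s2 s3 s4 s5 unfolding a_def b_def by linarith
qed



lemma ereal_h1: "(Z::ereal) \<le> ereal (A + p) \<Longrightarrow> Z - ereal p \<le> ereal A"
  by (cases Z) auto
lemma ereal_h2: "(Z::ereal) \<le> W + ereal p \<Longrightarrow> Z - ereal p \<le> W"
  by (cases Z; cases W) auto
lemma ereal_h3: "ereal (R + q - p) \<le> W \<Longrightarrow> ereal R \<le> (W - ereal q) + ereal p"
  by (cases W) auto
lemma ereal_h4: "ereal (z - p) \<le> W \<Longrightarrow> ereal z \<le> W + ereal p"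
  by (cases W) auto

lemma ereal_h5: "0 \<le> (Z::ereal) \<Longrightarrow> - ereal a \<le> Z - ereal a"
  by (cases Z) auto

lemma zeta_pot:
  assumes cm: "cmono c \<Gamma>" and yb: "(xb, y) \<in> \<Gamma>"
  shows "\<exists>\<psi>'. kantorovich_potential c \<Gamma> \<psi>' \<and> - ereal (c (xb, y)) \<le> \<psi>' xb \<and>
           (\<forall>x\<in>fst ` \<Gamma>. \<psi>' x + ereal (c (x, y)) \<le> Ifun c \<Gamma> x y)"
proof -
  define R where "R k xs ys \<sigma> = (\<Sum>i\<in>{1..<k}. c (xs i, ys i)) - (\<Sum>i\<in>{1..<k}. c (xs i, ys (\<sigma> i)))"
    for k :: nat and xs ys and \<sigma> :: "nat \<Rightarrow> nat"
  define Zs where "Zs y' = {ereal (R k xs ys \<sigma>) | k xs ys \<sigma>. 2 \<le> k \<and> ys 0 = y \<and>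
      (\<forall>i\<in>{1..<k}. (xs i, ys i) \<in> \<Gamma>) \<and> \<sigma> permutes {..<k} \<and> ys (\<sigma> 0) = y'}" for y'
  define Z where "Z y' = Sup (Zs y')" for y'
  define \<psi>' where "\<psi>' x = (SUP y'. Z y' - ereal (c (x, y')))" for x
  have Zmem: "ereal (R k xs ys \<sigma>) \<le> Z y'" if "2 \<le> k" "ys 0 = y" "\<forall>i\<in>{1..<k}. (xs i, ys i) \<in> \<Gamma>"
    "\<sigma> permutes {..<k}" "ys (\<sigma> 0) = y'" for k xs ys \<sigma> y'
    unfolding Z_def by (rule Sup_upper) (use that in \<open>auto simp: Zs_def\<close>)
  have Zle: "Z y' \<le> W" if "\<And>k xs ys \<sigma>. 2 \<le> k \<Longrightarrow> ys 0 = y \<Longrightarrow> \<forall>i\<in>{1..<k}. (xs i, ys i) \<in> \<Gamma> \<Longrightarrow>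
    \<sigma> permutes {..<k} \<Longrightarrow> ys (\<sigma> 0) = y' \<Longrightarrow> ereal (R k xs ys \<sigma>) \<le> W" for y' W
    unfolding Z_def by (rule Sup_least) (use that in \<open>auto simp: Zs_def\<close>)
  have Rsplit: "Ival c k xs ys \<sigma> = c (xs 0, ys 0) - c (xs 0, ys (\<sigma> 0)) + R k xs ys \<sigma>" if "0 < k" for k :: nat and xs ys \<sigma>
    unfolding Ival_def R_def using that by (simp add: sum_split0[of k])
  have Rcong: "R k (xs(0 := x1)) ys \<sigma> = R k xs ys \<sigma>" for k :: nat and xs ys \<sigma> x1
    unfolding R_def by (intro arg_cong2[where f="(-)"] sum.cong) auto
  have Ifin: "\<exists>J. Ifun c \<Gamma> x1 y = ereal J" if x1: "x1 \<in> fst ` \<Gamma>" for x1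
  proof -
    obtain y1 where y1: "(x1, y1) \<in> \<Gamma>" using x1 by force
    have up: "Ifun c \<Gamma> x1 y \<le> ereal (c (x1, y) + c (xb, y1) - c (x1, y1) - c (xb, y))"
      by (rule Ifun_le) (use Ival_bound[OF cm y1 yb] in auto)
    have "ereal (Ival c 2 (\<lambda>i. if i = 0 then x1 else xb) (\<lambda>_. y) id) \<le> Ifun c \<Gamma> x1 y"
      by (rule Ifun_ge) (use yb in auto)
    then have lo: "0 \<le> Ifun c \<Gamma> x1 y" by (simp add: Ival_def zero_ereal_def)
    show ?thesis using up lo by (cases "Ifun c \<Gamma> x1 y") auto
  qed
  have pc: "Z y' - ereal (c (x1, y')) \<le> ereal (J - c (x1, y))"
    if x1: "x1 \<in> fst ` \<Gamma>" and J: "Ifun c \<Gamma> x1 y = ereal J" for x1 y' J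
  proof (rule ereal_h1)
    show "Z y' \<le> ereal (J - c (x1, y) + c (x1, y'))"
    proof (rule Zle)
      fix k :: nat and xs ys \<sigma> assume k: "2 \<le> k" and y0: "ys 0 = y" and G: "\<forall>i\<in>{1..<k}. (xs i, ys i) \<in> \<Gamma>"
        and \<sigma>: "\<sigma> permutes {..<k}" and y': "ys (\<sigma> 0) = y'"
      have "ereal (Ival c k (xs(0 := x1)) ys \<sigma>) \<le> Ifun c \<Gamma> x1 y"
        by (rule Ifun_ge) (use k y0 G \<sigma> in auto)
      moreover have "Ival c k (xs(0 := x1)) ys \<sigma> = c (x1, y) - c (x1, y') + R k xs ys \<sigma>"
        using Rsplit[of k "xs(0 := x1)" ys \<sigma>] k y0 y' Rcong by simp
      ultimately show "ereal (R k xs ys \<sigma>) \<le> ereal (J - c (x1, y) + c (x1, y'))" using J by simp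
    qed
  qed
  have pb: "Z y' - ereal (c (x0, y')) \<le> Z y0 - ereal (c (x0, y0))" if g: "(x0, y0) \<in> \<Gamma>" for x0 y0 y'
  proof (rule ereal_h2)
    show "Z y' \<le> Z y0 - ereal (c (x0, y0)) + ereal (c (x0, y'))"
    proof (rule Zle)
      fix k :: nat and xs ys \<sigma> assume k: "2 \<le> k" and y0: "ys 0 = y" and G: "\<forall>i\<in>{1..<k}. (xs i, ys i) \<in> \<Gamma>"
        and \<sigma>: "\<sigma> permutes {..<k}" and y': "ys (\<sigma> 0) = y'"
      define xs2 where "xs2 = xs(k := x0)"
      define ys2 where "ys2 = ys(k := y0)"
      define \<sigma>2 where "\<sigma>2 = \<sigma> \<circ> Transposition.transpose 0 k"
      have k0: "k \<noteq> 0" using k by simp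
      have \<sigma>S: "\<sigma> permutes {..<Suc k}" using \<sigma> by (rule permutes_subset) auto
      have tS: "Transposition.transpose 0 k permutes {..<Suc k}" by (rule permutes_swap_id) auto
      have \<sigma>2S: "\<sigma>2 permutes {..<Suc k}" unfolding \<sigma>2_def by (rule permutes_compose[OF tS \<sigma>S])
      have \<sigma>k: "\<sigma> k = k" using permutes_not_in[OF \<sigma>] by simp
      have \<sigma>lt: "\<sigma> i < k" if "i < k" for i using permutes_in_image[OF \<sigma>] that by simp
      have G2: "\<forall>i\<in>{1..<Suc k}. (xs2 i, ys2 i) \<in> \<Gamma>"
        using G g by (auto simp: xs2_def ys2_def less_Suc_eq)
      have "ereal (R (Suc k) xs2 ys2 \<sigma>2) \<le> Z y0"
      proof (rule Zmem)
        show "2 \<le> Suc k" using k by simp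
        show "ys2 0 = y" using y0 k0 by (simp add: ys2_def)
        show "\<forall>i\<in>{1..<Suc k}. (xs2 i, ys2 i) \<in> \<Gamma>" by (rule G2)
        show "\<sigma>2 permutes {..<Suc k}" by (rule \<sigma>2S)
        show "ys2 (\<sigma>2 0) = y0" using \<sigma>k by (simp add: ys2_def \<sigma>2_def)
      qed
      moreover have "R (Suc k) xs2 ys2 \<sigma>2 = R k xs ys \<sigma> + c (x0, y0) - c (x0, y')"
      proof -
        have e1: "(\<Sum>i\<in>{1..<Suc k}. c (xs2 i, ys2 i)) = (\<Sum>i\<in>{1..<k}. c (xs i, ys i)) + c (x0, y0)"
          using k by (simp add: xs2_def ys2_def)
        have e2: "(\<Sum>i\<in>{1..<Suc k}. c (xs2 i, ys2 (\<sigma>2 i))) = (\<Sum>i\<in>{1..<k}. c (xs2 i, ys2 (\<sigma>2 i))) + c (xs2 k, ys2 (\<sigma>2 k))"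
          using k by simp
        have e3: "c (xs2 k, ys2 (\<sigma>2 k)) = c (x0, y')"
          using \<sigma>lt[of 0] k0 y' by (simp add: xs2_def ys2_def \<sigma>2_def)
        have e4: "(\<Sum>i\<in>{1..<k}. c (xs2 i, ys2 (\<sigma>2 i))) = (\<Sum>i\<in>{1..<k}. c (xs i, ys (\<sigma> i)))"
        proof (intro sum.cong refl)
          fix i assume i: "i \<in> {1..<k}"
          then have "\<sigma>2 i = \<sigma> i" by (simp add: \<sigma>2_def Transposition.transpose_def)
          moreover have "\<sigma> i < k" using i \<sigma>lt by simp
          ultimately show "c (xs2 i, ys2 (\<sigma>2 i)) = c (xs i, ys (\<sigma> i))" using i by (simp add: xs2_def ys2_def)
        qed
        show ?thesis unfolding R_def using e1 e2 e3 e4 by simp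
      qed
      ultimately have "ereal (R k xs ys \<sigma> + c (x0, y0) - c (x0, y')) \<le> Z y0" by simp
      then show "ereal (R k xs ys \<sigma>) \<le> Z y0 - ereal (c (x0, y0)) + ereal (c (x0, y'))"
        by (rule ereal_h3)
    qed
  qed
  have z1: "0 \<le> Z y"
  proof -
    have "ereal (R 2 (\<lambda>_. xb) (\<lambda>_. y) id) \<le> Z y" by (rule Zmem) (use yb in auto)
    then show ?thesis by (simp add: R_def zero_ereal_def)
  qed
  have p1: "- ereal (c (x, y)) \<le> \<psi>' x" for x
    unfolding \<psi>'_def
  proof (rule SUP_upper2[of y])
    show "- ereal (c (x, y)) \<le> Z y - ereal (c (x, y))" by (rule ereal_h5[OF z1])
  qed simp
  have p2: "\<psi>' x1 \<le> ereal (J - c (x1, y))" if "x1 \<in> fst ` \<Gamma>" "Ifun c \<Gamma> x1 y = ereal J" for x1 J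
    unfolding \<psi>'_def by (rule SUP_least) (use pc[OF that] in auto)
  have p3: "\<psi>' x0 = Z y0 - ereal (c (x0, y0))" if g: "(x0, y0) \<in> \<Gamma>" for x0 y0
  proof (rule antisym)
    show "\<psi>' x0 \<le> Z y0 - ereal (c (x0, y0))" unfolding \<psi>'_def by (rule SUP_least) (use pb[OF g] in auto)
    show "Z y0 - ereal (c (x0, y0)) \<le> \<psi>' x0" unfolding \<psi>'_def by (rule SUP_upper) simp
  qed
  have Zfin: "\<exists>z. Z y0 = ereal z" if g: "(x0, y0) \<in> \<Gamma>" for x0 y0
  proof -
    have x0X: "x0 \<in> fst ` \<Gamma>" using g by force
    obtain J where J: "Ifun c \<Gamma> x0 y = ereal J" using Ifin[OF x0X] by blast
    have "Z y0 - ereal (c (x0, y0)) \<le> ereal (J - c (x0, y))" using p2[OF x0X J] p3[OF g] by simp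
    moreover have "- ereal (c (x0, y)) \<le> Z y0 - ereal (c (x0, y0))" using p1[of x0] p3[OF g] by simp
    ultimately show ?thesis by (cases "Z y0") auto
  qed
  have p4: "c_conj c \<psi>' y0 = Z y0" and p4': "\<psi>' x0 < \<infinity>" if g: "(x0, y0) \<in> \<Gamma>" for x0 y0
  proof -
    obtain z where z: "Z y0 = ereal z" using Zfin[OF g] by blast
    show "c_conj c \<psi>' y0 = Z y0"
    proof (rule antisym)
      have "c_conj c \<psi>' y0 \<le> \<psi>' x0 + ereal (c (x0, y0))" by (rule conj_le)
      also have "\<dots> = Z y0" using p3[OF g] z by simp
      finally show "c_conj c \<psi>' y0 \<le> Z y0" .
      show "Z y0 \<le> c_conj c \<psi>' y0" unfolding c_conj_def
      proof (rule INF_greatest)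
        fix x
        have "Z y0 - ereal (c (x, y0)) \<le> \<psi>' x" unfolding \<psi>'_def by (rule SUP_upper) simp
        then have "ereal (z - c (x, y0)) \<le> \<psi>' x" using z by simp
        then show "Z y0 \<le> \<psi>' x + ereal (c (x, y0))" unfolding z by (rule ereal_h4)
      qed
    qed
    show "\<psi>' x0 < \<infinity>" using p3[OF g] z by simp
  qed
  have xbX: "xb \<in> fst ` \<Gamma>" using yb by force
  have kp: "kantorovich_potential c \<Gamma> \<psi>'"
    unfolding kantorovich_potential_def
  proof
    show "c_convex c \<psi>'" unfolding c_convex_def
    proof (intro conjI)
      show "\<forall>x. \<psi>' x \<noteq> - \<infinity>" using p1 by (metis MInfty_neq_ereal(1) ereal_infty_less_eq(2) ereal_uminus_uminus uminus_ereal.simps(1))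
      show "\<exists>x. \<psi>' x \<noteq> \<infinity>" using p4'[OF yb] by auto
      show "\<exists>\<zeta>. \<forall>x. \<psi>' x = (SUP y. \<zeta> y - ereal (c (x, y)))" unfolding \<psi>'_def by blast
    qed
    show "\<Gamma> \<subseteq> c_subdiff c \<psi>'"
    proof
      fix p assume pG: "p \<in> \<Gamma>"
      obtain x0 y0 where p: "p = (x0, y0)" by force
      with pG have g: "(x0, y0) \<in> \<Gamma>" by simp
      obtain z where z: "Z y0 = ereal z" using Zfin[OF g] by blast
      show "p \<in> c_subdiff c \<psi>'" unfolding p c_subdiff_def
        using p4[OF g] p4'[OF g] p3[OF g] z by simp
    qed
  qed
  have r2: "- ereal (c (xb, y)) \<le> \<psi>' xb" by (rule p1)
  have r3: "\<forall>x\<in>fst ` \<Gamma>. \<psi>' x + ereal (c (x, y)) \<le> Ifun c \<Gamma> x y"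
  proof
    fix x assume x: "x \<in> fst ` \<Gamma>"
    obtain J where J: "Ifun c \<Gamma> x y = ereal J" using Ifin[OF x] by blast
    have "\<psi>' x \<le> ereal (J - c (x, y))" by (rule p2[OF x J])
    then show "\<psi>' x + ereal (c (x, y)) \<le> Ifun c \<Gamma> x y" unfolding J by (cases "\<psi>' x") auto
  qed
  show ?thesis using kp r2 r3 by blast
qed



lemma I_formula:
  assumes cm: "cmono c \<Gamma>"
    and uniq: "\<forall>\<psi>1 \<psi>2. c_convex c \<psi>1 \<and> \<Gamma> \<subseteq> c_subdiff c \<psi>1 \<and>
                       c_convex c \<psi>2 \<and> \<Gamma> \<subseteq> c_subdiff c \<psi>2 \<longrightarrow>
                 (\<exists>C::real. \<forall>x \<in> fst ` \<Gamma>. \<psi>1 x = \<psi>2 x + ereal C)"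
    and kp: "kantorovich_potential c \<Gamma> \<psi>" and x: "x \<in> fst ` \<Gamma>" and y: "y \<in> snd ` \<Gamma>"
  shows "Ifun c \<Gamma> x y = ereal (c (x, y)) - c_conj c \<psi> y + \<psi> x"
proof -
  define a where "a x = real_of_ereal (\<psi> x)" for x
  obtain xb where yb: "(xb, y) \<in> \<Gamma>" using y by force
  obtain y1 where y1: "(x, y1) \<in> \<Gamma>" using x by force
  have ax: "\<psi> x = ereal (a x)" using pot_fin(1)[OF kp y1] unfolding a_def .
  have axb: "\<psi> xb = ereal (a xb)" using pot_fin(1)[OF kp yb] unfolding a_def .
  have hby: "c_conj c \<psi> y = ereal (a xb + c (xb, y))" using pot_fin(2)[OF kp yb] unfolding a_def .
  have up: "Ifun c \<Gamma> x y \<le> ereal (c (x, y) - (a xb + c (xb, y)) + a x)"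
  proof (rule Ifun_le)
    fix k :: nat and xs ys \<sigma> assume "2 \<le> k" "xs 0 = x" "ys 0 = y" "\<forall>i\<in>{1..<k}. (xs i, ys i) \<in> \<Gamma>" "\<sigma> permutes {..<k}"
    from Ival_pot[OF kp x y this] show "ereal (Ival c k xs ys \<sigma>) \<le> ereal (c (x, y) - (a xb + c (xb, y)) + a x)"
      using hby unfolding a_def by simp
  qed
  obtain \<psi>' where kp': "kantorovich_potential c \<Gamma> \<psi>'" and pxb: "- ereal (c (xb, y)) \<le> \<psi>' xb"
    and pI: "\<forall>x\<in>fst ` \<Gamma>. \<psi>' x + ereal (c (x, y)) \<le> Ifun c \<Gamma> x y"
    using zeta_pot[OF cm yb] by blast
  obtain C where C: "\<forall>x\<in>fst ` \<Gamma>. \<psi>' x = \<psi> x + ereal C"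
    using uniq kp kp' unfolding kantorovich_potential_def by blast
  have xbX: "xb \<in> fst ` \<Gamma>" using yb by force
  have "\<psi>' xb = \<psi> xb + ereal C" using C xbX by blast
  then have "- ereal (c (xb, y)) \<le> ereal (a xb + C)" using pxb axb by simp
  then have Cge: "- c (xb, y) \<le> a xb + C" by simp
  have "\<psi>' x + ereal (c (x, y)) \<le> Ifun c \<Gamma> x y" using pI x by blast
  moreover have "\<psi>' x = ereal (a x + C)"
  proof -
    have "\<psi>' x = \<psi> x + ereal C" using C x by blast
    then show ?thesis using ax by simp
  qed
  ultimately have "ereal (a x + C + c (x, y)) \<le> Ifun c \<Gamma> x y" by simp
  moreover have "ereal (c (x, y) - (a xb + c (xb, y)) + a x) \<le> ereal (a x + C + c (x, y))"
    using Cge by simp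
  ultimately have lo: "ereal (c (x, y) - (a xb + c (xb, y)) + a x) \<le> Ifun c \<Gamma> x y" by (rule order_trans[rotated])
  have "Ifun c \<Gamma> x y = ereal (c (x, y) - (a xb + c (xb, y)) + a x)" using up lo by (rule antisym)
  then show ?thesis using ax hby by simp
qed


theorem proposition4p5:
  fixes \<mu> :: "'a::polish_space measure" and \<nu> :: "'b::polish_space measure"
    and c :: "'a \<times> 'b \<Rightarrow> real"
    and \<pi> :: "real \<Rightarrow> ('a \<times> 'b) measure" and \<pi>s :: "('a \<times> 'b) measure"
  assumes "prob_space \<mu>" and "sets \<mu> = sets borel"
    and "prob_space \<nu>" and "sets \<nu> = sets borel"
    and "continuous_on UNIV c" and "\<forall>z. c z \<ge> 0"
    and "\<forall>\<epsilon>>0. \<pi> \<epsilon> \<in> couplings \<mu> \<nu> \<and> cyc_invariant c \<epsilon> \<mu> \<nu> (\<pi> \<epsilon>)"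
    and "\<pi>s \<in> couplings \<mu> \<nu>" and "weak_conv_at0 \<pi> \<pi>s"
    and uniq: "\<forall>\<psi>1 \<psi>2. c_convex c \<psi>1 \<and> spt \<pi>s \<subseteq> c_subdiff c \<psi>1 \<and>
                       c_convex c \<psi>2 \<and> spt \<pi>s \<subseteq> c_subdiff c \<psi>2 \<longrightarrow>
                 (\<exists>C::real. \<forall>x \<in> fst ` spt \<pi>s. \<psi>1 x = \<psi>2 x + ereal C)"
  shows "(\<forall>\<psi>. kantorovich_potential c (spt \<pi>s) \<psi> \<longrightarrow>
            (\<forall>x \<in> fst ` spt \<pi>s. \<forall>y \<in> snd ` spt \<pi>s.
               Ifun c (spt \<pi>s) x y = ereal (c (x, y)) - c_conj c \<psi> y + \<psi> x))
       \<and> (\<forall>x \<in> fst ` spt \<pi>s. \<forall>y \<in> snd ` spt \<pi>s. Ifun c (spt \<pi>s) x y < \<infinity>)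
       \<and> (\<forall>x \<in> fst ` spt \<pi>s. \<forall>y \<in> snd ` spt \<pi>s. \<forall>x' \<in> fst ` spt \<pi>s. \<forall>y' \<in> snd ` spt \<pi>s.
            (x', y) \<in> spt \<pi>s \<and> (x, y') \<in> spt \<pi>s \<longrightarrow>
            Ifun c (spt \<pi>s) x y + Ifun c (spt \<pi>s) x' y' =
              ereal (c (x, y) + c (x', y') - c (x, y') - c (x', y)))"
  proof -
  have cm: "cmono c (spt \<pi>s)" unfolding cmono_def
    using cm_spt[OF assms(1,2,3,4,5,7,8,9)] by blast
  have P1: "\<forall>\<psi>. kantorovich_potential c (spt \<pi>s) \<psi> \<longrightarrow>
            (\<forall>x \<in> fst ` spt \<pi>s. \<forall>y \<in> snd ` spt \<pi>s.
               Ifun c (spt \<pi>s) x y = ereal (c (x, y)) - c_conj c \<psi> y + \<psi> x)"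
    using I_formula[OF cm uniq] by blast
  have P2: "\<forall>x \<in> fst ` spt \<pi>s. \<forall>y \<in> snd ` spt \<pi>s. Ifun c (spt \<pi>s) x y < \<infinity>"
  proof (intro ballI)
    fix x y assume x: "x \<in> fst ` spt \<pi>s" and y: "y \<in> snd ` spt \<pi>s"
    obtain y1 where y1: "(x, y1) \<in> spt \<pi>s" using x by force
    obtain x1 where x1: "(x1, y) \<in> spt \<pi>s" using y by force
    have "Ifun c (spt \<pi>s) x y \<le> ereal (c (x, y) + c (x1, y1) - c (x, y1) - c (x1, y))"
      by (rule Ifun_le) (use Ival_bound[OF cm y1 x1] in auto)
    then show "Ifun c (spt \<pi>s) x y < \<infinity>" by (cases "Ifun c (spt \<pi>s) x y") auto
  qed
  have P3: "\<forall>x \<in> fst ` spt \<pi>s. \<forall>y \<in> snd ` spt \<pi>s. \<forall>x' \<in> fst ` spt \<pi>s. \<forall>y' \<in> snd ` spt \<pi>s.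
            (x', y) \<in> spt \<pi>s \<and> (x, y') \<in> spt \<pi>s \<longrightarrow>
            Ifun c (spt \<pi>s) x y + Ifun c (spt \<pi>s) x' y' =
              ereal (c (x, y) + c (x', y') - c (x, y') - c (x', y))"
  proof (intro ballI impI)
    fix x y x' y' assume x: "x \<in> fst ` spt \<pi>s" and y: "y \<in> snd ` spt \<pi>s"
      and x': "x' \<in> fst ` spt \<pi>s" and y': "y' \<in> snd ` spt \<pi>s"
      and h: "(x', y) \<in> spt \<pi>s \<and> (x, y') \<in> spt \<pi>s"
    then have h1: "(x', y) \<in> spt \<pi>s" and h2: "(x, y') \<in> spt \<pi>s" by auto
    obtain \<psi> where kp: "kantorovich_potential c (spt \<pi>s) \<psi>"
      using zeta_pot[OF cm h1] by blast
    define a where "a z = real_of_ereal (\<psi> z)" for z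
    have ax: "\<psi> x = ereal (a x)" using pot_fin(1)[OF kp h2] unfolding a_def .
    have ax': "\<psi> x' = ereal (a x')" using pot_fin(1)[OF kp h1] unfolding a_def .
    have by1: "c_conj c \<psi> y = ereal (a x' + c (x', y))" using pot_fin(2)[OF kp h1] unfolding a_def .
    have by2: "c_conj c \<psi> y' = ereal (a x + c (x, y'))" using pot_fin(2)[OF kp h2] unfolding a_def .
    have "Ifun c (spt \<pi>s) x y = ereal (c (x, y)) - c_conj c \<psi> y + \<psi> x"
      by (rule I_formula[OF cm uniq kp x y])
    moreover have "Ifun c (spt \<pi>s) x' y' = ereal (c (x', y')) - c_conj c \<psi> y' + \<psi> x'"
      by (rule I_formula[OF cm uniq kp x' y'])
    ultimately show "Ifun c (spt \<pi>s) x y + Ifun c (spt \<pi>s) x' y' =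
              ereal (c (x, y) + c (x', y') - c (x, y') - c (x', y))"
      using ax ax' by1 by2 by simp
  qed
  show ?thesis using P1 P2 P3 by blast
qed

end
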